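(* Let $R=R_1\times R_2$ be a direct product of two finite commutative local rings with identity, and let $I=I_1\times I_2$ where $I_1$ is a proper ideal of $R_1$ and $I_2$ is a proper ideal of $R_2$. If the vertex set of $\Gamma''_{I_1}(R_1)$ or the vertex set of $\Gamma''_{I_2}(R_2)$ has more than one element, then $\Gamma''_I(R)$ is not planar.
   Context: The product has componentwise operations. For a commutative ring $S$ and an ideal $J$ of $S$, $\Gamma''_J(S)$ is the simple undirected graph whose vertex set is $\{x\in S\setminus J : xS+J\neq S\}$, with distinct vertices $x,y$ adjacent if and only if $x\notin yS+J$ and $y\notin xS+J$. A graph is planar if it can be drawn in the plane with edges meeting only at their endpoints. *)

theory Defs
  imports "HOL-Analysis.Analysis"
begin

instantiation prod :: (times, times) times
begin
definition times_prod_def: "x * y = (fst x * fst y, snd x * snd y)"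
instance ..
end

instantiation prod :: (one, one) one
begin
definition one_prod_def: "1 = (1, 1)"
instance ..
end

instance prod :: (comm_ring_1, comm_ring_1) comm_ring_1
  by standard (auto simp: times_prod_def one_prod_def zero_prod_def plus_prod_def
      minus_prod_def uminus_prod_def algebra_simps prod_eq_iff)

section \<open>Ideals and local rings (type-class idiom, the ring is the whole type)\<close>

definition is_ideal :: "'a::comm_ring_1 set \<Rightarrow> bool" where
  "is_ideal I \<longleftrightarrow> 0 \<in> I \<and> (\<forall>x\<in>I. \<forall>y\<in>I. x + y \<in> I) \<and> (\<forall>x\<in>I. \<forall>r. r * x \<in> I)"

definition maximal_ideal :: "'a::comm_ring_1 set \<Rightarrow> bool" where
  "maximal_ideal M \<longleftrightarrow> is_ideal M \<and> M \<noteq> UNIV \<and>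
     (\<forall>J. is_ideal J \<and> M \<subseteq> J \<longrightarrow> J = M \<or> J = UNIV)"

definition local_ring :: "'a::comm_ring_1 itself \<Rightarrow> bool" where
  "local_ring _ \<longleftrightarrow> (\<exists>!M::'a set. maximal_ideal M)"

definition coset_ideal :: "'a::comm_ring_1 \<Rightarrow> 'a set \<Rightarrow> 'a set" where
  "coset_ideal x J = {x * s + j | s j. j \<in> J}"

definition gamma_verts :: "'a::comm_ring_1 set \<Rightarrow> 'a set" where
  "gamma_verts J = {x. x \<notin> J \<and> coset_ideal x J \<noteq> UNIV}"

definition gamma_adj :: "'a::comm_ring_1 set \<Rightarrow> 'a \<Rightarrow> 'a \<Rightarrow> bool" where
  "gamma_adj J x y \<longleftrightarrow> x \<in> gamma_verts J \<and> y \<in> gamma_verts J \<and> x \<noteq> y \<and>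
     x \<notin> coset_ideal y J \<and> y \<notin> coset_ideal x J"

text \<open>A (simple undirected) graph with vertex set V and symmetric adjacency E is planar if it
  can be drawn in the plane: vertices go to distinct points, each edge {u,v} is drawn as an arc
  from u to v that passes through no other vertex, and the arcs of two different edges meet only
  in common endpoints. (The drawing is given for ordered pairs; both orientations of an edge must
  be valid drawings of it, which is no restriction since arcs may be reversed.)\<close>
definition planar :: "'v set \<Rightarrow> ('v \<Rightarrow> 'v \<Rightarrow> bool) \<Rightarrow> bool" where
  "planar V E \<longleftrightarrow> (\<exists>(pos :: 'v \<Rightarrow> real \<times> real) (\<gamma> :: 'v \<Rightarrow> 'v \<Rightarrow> real \<Rightarrow> real \<times> real).
     inj_on pos V \<and>
     (\<forall>u\<in>V. \<forall>v\<in>V. E u v \<longrightarrow>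
        arc (\<gamma> u v) \<and> pathstart (\<gamma> u v) = pos u \<and> pathfinish (\<gamma> u v) = pos v \<and>
        (\<forall>w\<in>V. w \<noteq> u \<and> w \<noteq> v \<longrightarrow> pos w \<notin> path_image (\<gamma> u v))) \<and>
     (\<forall>u\<in>V. \<forall>v\<in>V. \<forall>u'\<in>V. \<forall>v'\<in>V. E u v \<and> E u' v' \<and> {u, v} \<noteq> {u', v'} \<longrightarrow>
        path_image (\<gamma> u v) \<inter> path_image (\<gamma> u' v') \<subseteq> pos ` ({u, v} \<inter> {u', v'})))"

end

theory Submission
  imports Defs "HOL-Complex_Analysis.Complex_Analysis"
begin

definition aint :: "(real \<Rightarrow> complex) \<Rightarrow> complex set" where
  "aint g = path_image g - {pathstart g, pathfinish g}"

lemma conn_sub_open: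
  assumes "connected S" "open U" "open V" "U \<inter> V = {}" "S \<subseteq> U \<union> V" "x \<in> S" "x \<in> U"
  shows "S \<subseteq> U"
  using connectedD[OF assms(1-3)] assms(4-7) by blast

lemma aint_eq:
  assumes "arc g" shows "aint g = g ` {0<..<1}"
proof -
  have inj: "inj_on g {0..1}" using assms by (simp add: arc_def)
  show ?thesis
  proof
    show "aint g \<subseteq> g ` {0<..<1}"
      by (auto simp: aint_def path_image_def pathstart_def pathfinish_def)
        (metis atLeastAtMost_iff greaterThanLessThan_iff image_eqI less_eq_real_def)
    show "g ` {0<..<1} \<subseteq> aint g"
    proof
      fix y assume "y \<in> g ` {0<..<1}"
      then obtain t where t: "0 < t" "t < 1" "y = g t" by auto
      have "g t \<noteq> g 0" "g t \<noteq> g 1" using inj t unfolding inj_on_def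
        by (metis atLeastAtMost_iff less_eq_real_def order.refl zero_le_one less_irrefl)+
      then show "y \<in> aint g" using t
        by (auto simp: aint_def path_image_def pathstart_def pathfinish_def)
    qed
  qed
qed

lemma aint_connected: "arc g \<Longrightarrow> connected (aint g)"
  apply (simp add: aint_eq)
  apply (rule connected_continuous_image)
   apply (rule continuous_on_subset[of "{0..1}"])
  apply (auto simp: arc_def path_def is_interval_connected is_interval_convex_1)
  done

lemma aint_ne: "arc g \<Longrightarrow> aint g \<noteq> {}"
  by (simp add: aint_eq)

lemma aint_sub: "aint g \<subseteq> path_image g" by (auto simp: aint_def)

locale theta2 =
  fixes a b :: "real \<Rightarrow> complex" and p q :: complex
  assumes arcs: "arc a" "arc b"
    and ends: "pathstart a = p" "pathfinish a = q" "pathstart b = p" "pathfinish b = q"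
    and pq: "p \<noteq> q"
    and meet: "path_image a \<inter> path_image b = {p, q}"
begin

definition "lp = a +++ reversepath b"

lemma lp_simple: "simple_path lp" and lp_closed: "pathfinish lp = pathstart lp"
  and lp_image: "path_image lp = path_image a \<union> path_image b"
  using arcs ends meet
  by (auto simp: lp_def simple_path_join_loop_eq arc_reversepath path_image_join)

lemma JI:
  defines "S \<equiv> path_image a \<union> path_image b"
  shows "inside S \<noteq> {}" "open (inside S)" "connected (inside S)" "open (outside S)"
    "inside S \<inter> outside S = {}" "inside S \<union> outside S = - S"
    "frontier (inside S) = S" "frontier (outside S) = S"
  using Jordan_inside_outside[OF lp_simple lp_closed] unfolding lp_image S_def by auto

lemma wn_inside: "z \<in> inside (path_image a \<union> path_image b) \<Longrightarrow> norm (winding_number lp z) = 1"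
  using simple_closed_path_norm_winding_number_inside[OF lp_simple] lp_image by auto

lemma wn_outside: "z \<in> outside (path_image a \<union> path_image b) \<Longrightarrow> winding_number lp z = 0"
  using winding_number_zero_in_outside[OF simple_path_imp_path[OF lp_simple] lp_closed] lp_image by auto

lemma wn_split: "z \<notin> path_image a \<union> path_image b \<Longrightarrow>
    winding_number lp z = winding_number a z - winding_number b z"
  using arcs ends unfolding lp_def
  by (simp add: winding_number_join arc_imp_path winding_number_reversepath)

end

lemma theta2_sym: "theta2 a b p q \<Longrightarrow> theta2 b a p q"
  unfolding theta2_def by (simp add: inf_commute)

definition theta :: "(real \<Rightarrow> complex) \<Rightarrow> (real \<Rightarrow> complex) \<Rightarrow> (real \<Rightarrow> complex) \<Rightarrow> complex \<Rightarrow> complex \<Rightarrow> bool" where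
  "theta a b c p q \<longleftrightarrow> theta2 a b p q \<and> theta2 a c p q \<and> theta2 b c p q"

lemma theta_perm: "theta a b c p q \<Longrightarrow> theta b a c p q" "theta a b c p q \<Longrightarrow> theta a c b p q"
  unfolding theta_def using theta2_sym by blast+

lemma aint_path: "arc a \<Longrightarrow> pathstart a = p \<Longrightarrow> pathfinish a = q \<Longrightarrow> path_image a = aint a \<union> {p, q}"
  by (auto simp: aint_def)

lemma side:
  assumes "theta2 b c p q" "connected A" "A \<inter> (path_image b \<union> path_image c) = {}"
  shows "A \<subseteq> inside (path_image b \<union> path_image c) \<or> A \<subseteq> outside (path_image b \<union> path_image c)"
proof -
  interpret theta2 b c p q by fact
  show ?thesis using connectedD[OF assms(2) JI(2) JI(4)] JI(5) JI(6) assms(3) by blast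
qed

lemma aint_avoid:
  assumes "theta a b c p q" shows "aint a \<inter> (path_image b \<union> path_image c) = {}"
proof -
  have "path_image a \<inter> path_image b = {p, q}" "path_image a \<inter> path_image c = {p, q}"
    "pathstart a = p" "pathfinish a = q"
    using assms unfolding theta_def theta2_def by auto
  then show ?thesis unfolding aint_def by blast
qed

lemma push_out:
  assumes "theta2 b c p q" "connected A" "A \<inter> (path_image b \<union> path_image c) = {}"
    and "m \<in> closure A" "m \<in> outside (path_image b \<union> path_image c)"
  shows "A \<subseteq> outside (path_image b \<union> path_image c)"
proof -
  interpret theta2 b c p q by fact
  let ?S = "path_image b \<union> path_image c"
  { assume "A \<subseteq> inside ?S"
    then have "m \<in> closure (inside ?S)" using assms(4) closure_mono by blast
    then have "m \<in> inside ?S \<union> ?S" using JI(7) closure_Un_frontier by metis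
    then have False using assms(5) JI(5) JI(6) by blast }
  then show ?thesis using side[OF assms(1-3)] by blast
qed

lemma one_inside_aux:
  assumes th: "theta a b c p q"
   and n1: "\<not> aint a \<subseteq> inside (path_image b \<union> path_image c)"
   and n2: "\<not> aint b \<subseteq> inside (path_image a \<union> path_image c)"
   and n3: "\<not> aint c \<subseteq> inside (path_image a \<union> path_image b)"
  shows False
proof -
  have ab: "theta2 a b p q" and ac: "theta2 a c p q" and bc: "theta2 b c p q"
    using th by (auto simp: theta_def)
  have arcs: "arc a" "arc b" "arc c" and ends: "pathstart a = p" "pathfinish a = q"
    "pathstart b = p" "pathfinish b = q" "pathstart c = p" "pathfinish c = q"
    using ab ac unfolding theta2_def by auto
  have oa: "aint a \<subseteq> outside (path_image b \<union> path_image c)"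
    using side[OF bc aint_connected[OF arcs(1)] aint_avoid[OF th]] n1 by blast
  have ob: "aint b \<subseteq> outside (path_image a \<union> path_image c)"
    using side[OF ac aint_connected[OF arcs(2)] aint_avoid[OF theta_perm(1)[OF th]]] n2 by blast
  have oc: "aint c \<subseteq> outside (path_image a \<union> path_image b)"
    using side[OF ab aint_connected[OF arcs(3)] aint_avoid[OF theta_perm(2)[OF theta_perm(1)[OF theta_perm(2)[OF theta_perm(1)[OF th]]]]]] n3
    by blast
  interpret AB: theta2 a b p q by fact
  interpret AC: theta2 a c p q by fact
  interpret BC: theta2 b c p q by fact
  let ?I = "inside (path_image a \<union> path_image b)"
  obtain x where x: "x \<in> ?I" using AB.JI(1) by blast
  have pq: "p \<in> path_image a" "q \<in> path_image a" "p \<in> path_image b" "q \<in> path_image b"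
    using ends pathstart_in_path_image[of a] pathfinish_in_path_image[of a]
      pathstart_in_path_image[of b] pathfinish_in_path_image[of b] by auto
  have Ic: "?I \<inter> path_image c = {}"
  proof (rule ccontr)
    assume "\<not> ?thesis"
    then obtain z where z: "z \<in> ?I" "z \<in> path_image c" by blast
    have "z \<notin> path_image a \<union> path_image b" using z(1) inside_no_overlap by blast
    then have "z \<in> aint c" using z(2) pq aint_path[OF arcs(3) ends(5,6)] by blast
    then have "z \<in> outside (path_image a \<union> path_image b)" using oc by blast
    then show False using z(1) inside_Int_outside by blast
  qed
  have Iab: "?I \<inter> (path_image a \<union> path_image b) = {}" using inside_no_overlap by blast
  obtain ma where ma: "ma \<in> aint a" using aint_ne[OF arcs(1)] by blast
  obtain mb where mb: "mb \<in> aint b" using aint_ne[OF arcs(2)] by blast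
  have cl: "path_image a \<union> path_image b \<subseteq> closure ?I"
    using AB.JI(7) closure_Un_frontier by blast
  have "?I \<inter> (path_image b \<union> path_image c) = {}" using Ic Iab by blast
  moreover have "ma \<in> closure ?I" using cl ma aint_sub by blast
  ultimately have "?I \<subseteq> outside (path_image b \<union> path_image c)"
    using push_out[OF bc AB.JI(3), of ma] ma oa by blast
  then have x1: "x \<in> outside (path_image b \<union> path_image c)" using x by blast
  have "?I \<inter> (path_image a \<union> path_image c) = {}" using Ic Iab by blast
  moreover have "mb \<in> closure ?I" using cl mb aint_sub by blast
  ultimately have "?I \<subseteq> outside (path_image a \<union> path_image c)"
    using push_out[OF ac AB.JI(3), of mb] mb ob by blast
  then have x2: "x \<in> outside (path_image a \<union> path_image c)" using x by blast
  have xn: "x \<notin> path_image a \<union> path_image b" "x \<notin> path_image a \<union> path_image c"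
    "x \<notin> path_image b \<union> path_image c"
    using x Ic Iab by blast+
  have "winding_number b x - winding_number c x = 0"
    using BC.wn_outside[OF x1] BC.wn_split[OF xn(3)] by simp
  moreover have "winding_number a x - winding_number c x = 0"
    using AC.wn_outside[OF x2] AC.wn_split[OF xn(2)] by simp
  moreover have "norm (winding_number a x - winding_number b x) = 1"
    using AB.wn_inside[OF x] AB.wn_split[OF xn(1)] by simp
  ultimately show False by simp
qed

lemma one_inside:
  assumes th: "theta a b c p q"
  shows "aint a \<subseteq> inside (path_image b \<union> path_image c) \<or> aint b \<subseteq> inside (path_image a \<union> path_image c)
    \<or> aint c \<subseteq> inside (path_image a \<union> path_image b)"
  using one_inside_aux[OF th] by blast

lemma no_point:
  assumes th: "theta a b c p q" and ci: "aint c \<subseteq> inside (path_image a \<union> path_image b)"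
    and x: "x \<notin> path_image a \<union> path_image b \<union> path_image c"
    and y: "y1 \<in> aint a" "y2 \<in> aint b" "y3 \<in> aint c"
    and cl: "y1 \<in> closure K" "y2 \<in> closure K" "y3 \<in> closure K"
    and K: "K = connected_component_set (- (path_image a \<union> path_image b \<union> path_image c)) x"
  shows False
proof -
  have ab: "theta2 a b p q" and ac: "theta2 a c p q" and bc: "theta2 b c p q"
    using th by (auto simp: theta_def)
  have arcs: "arc a" "arc b" "arc c" and ends: "pathstart a = p" "pathfinish a = q"
    "pathstart b = p" "pathfinish b = q" "pathstart c = p" "pathfinish c = q"
    and pq: "p \<noteq> q" and m: "path_image a \<inter> path_image b = {p, q}" "path_image a \<inter> path_image c = {p, q}"
      "path_image b \<inter> path_image c = {p, q}"
    using ab ac bc unfolding theta2_def by auto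
  interpret AB: theta2 a b p q by fact
  interpret AC: theta2 a c p q by fact
  interpret BC: theta2 b c p q by fact
  let ?A = "path_image a" and ?B = "path_image b" and ?C = "path_image c"
  have ne: "?C \<inter> inside (?A \<union> ?B) \<noteq> {}" using ci aint_ne[OF arcs(3)] aint_sub[of c] by blast
  obtain sp1: "inside (?A \<union> ?C) \<inter> inside (?B \<union> ?C) = {}"
     and sp2: "inside (?A \<union> ?C) \<union> inside (?B \<union> ?C) \<union> (?C - {p, q}) = inside (?A \<union> ?B)"
    using split_inside_simple_closed_curve[OF arc_imp_simple_path[OF arcs(1)] ends(1,2)
        arc_imp_simple_path[OF arcs(2)] ends(3,4) arc_imp_simple_path[OF arcs(3)] ends(5,6) pq m ne]
    by blast
  let ?O1 = "inside (?A \<union> ?C)" and ?O2 = "inside (?B \<union> ?C)" and ?O3 = "outside (?A \<union> ?B)"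
  have cov: "K \<subseteq> ?O1 \<union> ?O2 \<union> ?O3"
  proof
    fix z assume "z \<in> K"
    then have z: "z \<notin> ?A \<union> ?B \<union> ?C" unfolding K using connected_component_subset by blast
    then have "z \<in> inside (?A \<union> ?B) \<union> ?O3" using AB.JI(6) by blast
    then show "z \<in> ?O1 \<union> ?O2 \<union> ?O3" using sp2 z by blast
  qed
  have d13: "?O1 \<inter> ?O3 = {}" and d23: "?O2 \<inter> ?O3 = {}"
    using sp2 AB.JI(5) by blast+
  have Kc: "connected K" unfolding K by simp
  have xK: "x \<in> K" unfolding K using x by simp
  have y': "y1 \<in> ?A" "y1 \<noteq> p" "y1 \<noteq> q" "y2 \<in> ?B" "y2 \<noteq> p" "y2 \<noteq> q"
     "y3 \<in> ?C" "y3 \<noteq> p" "y3 \<noteq> q"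
    using y ends by (auto simp: aint_def)
  have y2n: "y2 \<notin> ?A \<union> ?C" using y' m by blast
  have y1n: "y1 \<notin> ?B \<union> ?C" using y' m by blast
  have y3n: "y3 \<notin> ?A \<union> ?B" using y' m by blast
  have yin: "y1 \<notin> inside (?A \<union> ?B)" "y2 \<notin> inside (?A \<union> ?B)"
    using y aint_sub[of a] aint_sub[of b] inside_no_overlap[of "?A \<union> ?B"] by blast+
  have y3i: "y3 \<notin> ?O3" using y(3) ci AB.JI(5) by blast
  have "x \<in> ?O1 \<union> ?O2 \<union> ?O3" using cov xK by blast
  moreover
  { assume xo: "x \<in> ?O1"
    have "K \<subseteq> ?O1"
      by (rule conn_sub_open[OF Kc AC.JI(2) _ _ _ xK xo, of "?O2 \<union> ?O3"])
        (use BC.JI(2) AB.JI(4) cov sp1 d13 in auto)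
    then have "closure K \<subseteq> closure ?O1" by (rule closure_mono)
    also have "closure ?O1 = ?O1 \<union> (?A \<union> ?C)" by (simp add: closure_Un_frontier AC.JI(7))
    finally have "closure K \<subseteq> ?O1 \<union> (?A \<union> ?C)" .
    then have False using cl(2) y2n yin sp2 by blast }
  moreover
  { assume xo: "x \<in> ?O2"
    have "K \<subseteq> ?O2"
      by (rule conn_sub_open[OF Kc BC.JI(2) _ _ _ xK xo, of "?O1 \<union> ?O3"])
        (use AC.JI(2) AB.JI(4) cov sp1 d23 in auto)
    then have "closure K \<subseteq> closure ?O2" by (rule closure_mono)
    also have "closure ?O2 = ?O2 \<union> (?B \<union> ?C)" by (simp add: closure_Un_frontier BC.JI(7))
    finally have "closure K \<subseteq> ?O2 \<union> (?B \<union> ?C)" .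
    then have False using cl(1) y1n yin sp2 by blast }
  moreover
  { assume xo: "x \<in> ?O3"
    have "K \<subseteq> ?O3"
      by (rule conn_sub_open[OF Kc AB.JI(4) _ _ _ xK xo, of "?O1 \<union> ?O2"])
        (use AC.JI(2) BC.JI(2) cov d13 d23 in auto)
    then have "closure K \<subseteq> closure ?O3" by (rule closure_mono)
    also have "closure ?O3 = ?O3 \<union> (?A \<union> ?B)" by (simp add: closure_Un_frontier AB.JI(8))
    finally have "closure K \<subseteq> ?O3 \<union> (?A \<union> ?B)" .
    then have False using cl(3) y3n y3i by blast }
  ultimately show False by blast
qed

lemma K33:
  fixes A B :: "nat \<Rightarrow> complex" and E :: "nat \<Rightarrow> nat \<Rightarrow> real \<Rightarrow> complex"
  assumes arcE: "\<And>i j. i < 3 \<Longrightarrow> j < 3 \<Longrightarrow> arc (E i j)"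
    and st: "\<And>i j. i < 3 \<Longrightarrow> j < 3 \<Longrightarrow> pathstart (E i j) = A i"
    and fi: "\<And>i j. i < 3 \<Longrightarrow> j < 3 \<Longrightarrow> pathfinish (E i j) = B j"
    and dA: "A 0 \<noteq> A 1"
    and avA: "\<And>i j. i < 2 \<Longrightarrow> j < 3 \<Longrightarrow> A 2 \<notin> path_image (E i j)"
    and cross: "\<And>i j i' j'. i < 3 \<Longrightarrow> j < 3 \<Longrightarrow> i' < 3 \<Longrightarrow> j' < 3 \<Longrightarrow> (i, j) \<noteq> (i', j') \<Longrightarrow>
      path_image (E i j) \<inter> path_image (E i' j') \<subseteq>
        (if i = i' then {A i} else {}) \<union> (if j = j' then {B j} else {})"
    and dAB: "\<And>i j. i < 3 \<Longrightarrow> j < 3 \<Longrightarrow> A i \<noteq> B j"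
  shows False
proof -
  define P where "P j = E 0 j +++ reversepath (E 1 j)" for j
  have PI: "path_image (P j) = path_image (E 0 j) \<union> path_image (E 1 j)" if "j < 3" for j
    unfolding P_def using that st fi by (simp add: path_image_join)
  have Parc: "arc (P j)" if "j < 3" for j
    unfolding P_def
    using that arcE st fi cross[of 0 j 1 j] by (intro arc_join) (auto simp: arc_reversepath)
  have Pst: "pathstart (P j) = A 0" "pathfinish (P j) = A 1" if "j < 3" for j
    unfolding P_def using that st by auto
  have A01: "A 0 \<in> path_image (E 0 j)" "A 1 \<in> path_image (E 1 j)" if "j < 3" for j
    using that st[of 0 j] st[of 1 j] pathstart_in_path_image[of "E 0 j"] pathstart_in_path_image[of "E 1 j"]
    by auto
  have th2: "theta2 (P j) (P k) (A 0) (A 1)" if "j < 3" "k < 3" "j \<noteq> k" for j k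
  proof -
    have "path_image (P j) \<inter> path_image (P k) \<subseteq> {A 0, A 1}"
      unfolding PI[OF that(1)] PI[OF that(2)]
      using cross[of 0 j 0 k] cross[of 0 j 1 k] cross[of 1 j 0 k] cross[of 1 j 1 k] that by auto
    moreover have "{A 0, A 1} \<subseteq> path_image (P j) \<inter> path_image (P k)"
      unfolding PI[OF that(1)] PI[OF that(2)] using A01 that by auto
    ultimately show ?thesis unfolding theta2_def using Parc Pst that dA by auto
  qed
  have th: "theta (P 0) (P 1) (P 2) (A 0) (A 1)"
    unfolding theta_def using th2 by auto
  have Bint: "B j \<in> aint (P j)" if "j < 3" for j
    unfolding aint_def using Pst[OF that] PI[OF that] dAB[of 0 j] dAB[of 1 j] that
      fi[of 0 j] pathfinish_in_path_image[of "E 0 j"] by auto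
  define \<Theta> where "\<Theta> = path_image (P 0) \<union> path_image (P 1) \<union> path_image (P 2)"
  have ThU: "\<Theta> = (\<Union>i\<in>{0,1}. \<Union>k\<in>{0,1,2}. path_image (E i k))"
    unfolding \<Theta>_def using PI[of 0] PI[of 1] PI[of 2] by auto
  have xn: "A 2 \<notin> \<Theta>" unfolding \<Theta>_def using avA PI by auto
  have reach: "B j \<in> closure (connected_component_set (- \<Theta>) (A 2))" if j: "j < 3" for j
  proof -
    let ?g = "E 2 j"
    let ?S = "?g ` {0..<1}"
    have ag: "arc ?g" using arcE j by auto
    have inj: "inj_on ?g {0..1}" using ag by (simp add: arc_def)
    have cg: "continuous_on {0..1} ?g" using ag by (simp add: arc_def path_def)
    have Sd: "?S \<inter> \<Theta> = {}"
    proof (rule ccontr)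
      assume "?S \<inter> \<Theta> \<noteq> {}"
      then obtain t where t: "0 \<le> t" "t < 1" "?g t \<in> \<Theta>" by auto
      then obtain i k where ik: "i \<in> {0,1}" "k \<in> {0,1,2}" "?g t \<in> path_image (E i k)"
        using t(3) ThU by blast
      have gt: "?g t \<in> path_image ?g" using t by (auto simp: path_image_def)
      have "?g t \<in> (if 2 = i then {A 2} else {}) \<union> (if j = k then {B j} else {})"
        using cross[of 2 j i k] ik gt j by fastforce
      then have "?g t = B j" using ik by (auto split: if_splits)
      also have "B j = ?g 1" using fi[of 2 j] j by (simp add: pathfinish_def)
      finally have "t = 1" using inj t unfolding inj_on_def by auto
      then show False using t by simp
    qed
    have Sc: "connected ?S"
      by (rule connected_continuous_image[OF continuous_on_subset[OF cg]])
        (auto simp: is_interval_connected is_interval_convex_1)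
    have x0: "A 2 \<in> ?S" using st[of 2 j] j by (force simp: pathstart_def)
    have SK: "?S \<subseteq> connected_component_set (- \<Theta>) (A 2)"
      by (rule connected_component_maximal[OF x0 Sc]) (use Sd in blast)
    have g1: "?g 1 \<in> closure ?S"
    proof -
      have "?g ` closure {0..<1} \<subseteq> closure ?S"
        by (rule image_closure_subset) (use cg closure_subset[of "?S"] in auto)
      moreover have "(1::real) \<in> closure {0..<1}" by simp
      ultimately show ?thesis by blast
    qed
    have g1B: "?g 1 = B j" using fi[of 2 j] j by (simp add: pathfinish_def)
    show ?thesis using subsetD[OF closure_mono[OF SK] g1] unfolding g1B .
  qed
  let ?K = "connected_component_set (- \<Theta>) (A 2)"
  have R: "B 0 \<in> closure ?K" "B 1 \<in> closure ?K" "B 2 \<in> closure ?K" using reach by simp_all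
  have BI: "B 0 \<in> aint (P 0)" "B 1 \<in> aint (P 1)" "B 2 \<in> aint (P 2)" using Bint by simp_all
  have e1: "\<Theta> = path_image (P 1) \<union> path_image (P 2) \<union> path_image (P 0)" unfolding \<Theta>_def by blast
  have e2: "\<Theta> = path_image (P 0) \<union> path_image (P 2) \<union> path_image (P 1)" unfolding \<Theta>_def by blast
  have xn1: "A 2 \<notin> path_image (P 1) \<union> path_image (P 2) \<union> path_image (P 0)" using xn e1 by simp
  have xn2: "A 2 \<notin> path_image (P 0) \<union> path_image (P 2) \<union> path_image (P 1)" using xn e2 by simp
  have xn3: "A 2 \<notin> path_image (P 0) \<union> path_image (P 1) \<union> path_image (P 2)" using xn \<Theta>_def by simp
  have K1: "?K = connected_component_set (- (path_image (P 1) \<union> path_image (P 2) \<union> path_image (P 0))) (A 2)"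
    using e1 by simp
  have K2: "?K = connected_component_set (- (path_image (P 0) \<union> path_image (P 2) \<union> path_image (P 1))) (A 2)"
    using e2 by simp
  have K3: "?K = connected_component_set (- (path_image (P 0) \<union> path_image (P 1) \<union> path_image (P 2))) (A 2)"
    using \<Theta>_def by simp
  consider "aint (P 0) \<subseteq> inside (path_image (P 1) \<union> path_image (P 2))"
    | "aint (P 1) \<subseteq> inside (path_image (P 0) \<union> path_image (P 2))"
    | "aint (P 2) \<subseteq> inside (path_image (P 0) \<union> path_image (P 1))"
    using one_inside[OF th] by blast
  then show False
  proof cases
    case 1
    show False
      by (rule no_point[OF theta_perm(2)[OF theta_perm(1)[OF th]] 1 xn1 BI(2) BI(3) BI(1) R(2) R(3) R(1) K1])
  next
    case 2
    show False
      by (rule no_point[OF theta_perm(2)[OF th] 2 xn2 BI(1) BI(3) BI(2) R(1) R(3) R(2) K2])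
  next
    case 3
    show False
      by (rule no_point[OF th 3 xn3 BI(1) BI(2) BI(3) R(1) R(2) R(3) K3])
  qed
qed

definition hC :: "real \<times> real \<Rightarrow> complex" where "hC z = Complex (fst z) (snd z)"

lemma hC_linear: "linear hC"
  by (rule linearI) (auto simp: hC_def complex_eq_iff)

lemma hC_inj: "inj hC"
  by (auto simp: inj_on_def hC_def prod_eq_iff)

lemma planar_K33:
  fixes V :: "'v set" and E :: "'v \<Rightarrow> 'v \<Rightarrow> bool" and va vb :: "nat \<Rightarrow> 'v"
  assumes inV: "\<And>i. i < 3 \<Longrightarrow> va i \<in> V" "\<And>j. j < 3 \<Longrightarrow> vb j \<in> V"
    and adj: "\<And>i j. i < 3 \<Longrightarrow> j < 3 \<Longrightarrow> E (va i) (vb j)"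
    and ia: "\<And>i i'. i < 3 \<Longrightarrow> i' < 3 \<Longrightarrow> va i = va i' \<Longrightarrow> i = i'"
    and ib: "\<And>j j'. j < 3 \<Longrightarrow> j' < 3 \<Longrightarrow> vb j = vb j' \<Longrightarrow> j = j'"
    and iab: "\<And>i j. i < 3 \<Longrightarrow> j < 3 \<Longrightarrow> va i \<noteq> vb j"
  shows "\<not> planar V E"
proof
  assume "planar V E"
  then obtain pos :: "'v \<Rightarrow> real \<times> real" and \<gamma> :: "'v \<Rightarrow> 'v \<Rightarrow> real \<Rightarrow> real \<times> real" where
    all: "inj_on pos V \<and>
     (\<forall>u\<in>V. \<forall>v\<in>V. E u v \<longrightarrow>
        arc (\<gamma> u v) \<and> pathstart (\<gamma> u v) = pos u \<and> pathfinish (\<gamma> u v) = pos v \<and>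
        (\<forall>w\<in>V. w \<noteq> u \<and> w \<noteq> v \<longrightarrow> pos w \<notin> path_image (\<gamma> u v))) \<and>
     (\<forall>u\<in>V. \<forall>v\<in>V. \<forall>u'\<in>V. \<forall>v'\<in>V. E u v \<and> E u' v' \<and> {u, v} \<noteq> {u', v'} \<longrightarrow>
        path_image (\<gamma> u v) \<inter> path_image (\<gamma> u' v') \<subseteq> pos ` ({u, v} \<inter> {u', v'}))"
    unfolding planar_def by (elim exE) (rule that)
  have ip: "inj_on pos V" using all by (rule conjunct1)
  have ed0: "\<forall>u\<in>V. \<forall>v\<in>V. E u v \<longrightarrow>
        arc (\<gamma> u v) \<and> pathstart (\<gamma> u v) = pos u \<and> pathfinish (\<gamma> u v) = pos v \<and>
        (\<forall>w\<in>V. w \<noteq> u \<and> w \<noteq> v \<longrightarrow> pos w \<notin> path_image (\<gamma> u v))"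
    using all by (rule conjunct1[OF conjunct2])
  have cr0: "\<forall>u\<in>V. \<forall>v\<in>V. \<forall>u'\<in>V. \<forall>v'\<in>V. E u v \<and> E u' v' \<and> {u, v} \<noteq> {u', v'} \<longrightarrow>
        path_image (\<gamma> u v) \<inter> path_image (\<gamma> u' v') \<subseteq> pos ` ({u, v} \<inter> {u', v'})"
    using all by (rule conjunct2[OF conjunct2])
  have ed: "\<And>u v. u \<in> V \<Longrightarrow> v \<in> V \<Longrightarrow> E u v \<Longrightarrow>
        arc (\<gamma> u v) \<and> pathstart (\<gamma> u v) = pos u \<and> pathfinish (\<gamma> u v) = pos v \<and>
        (\<forall>w\<in>V. w \<noteq> u \<and> w \<noteq> v \<longrightarrow> pos w \<notin> path_image (\<gamma> u v))"
    using ed0 by blast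
  have cr: "\<And>u v u' v'. u \<in> V \<Longrightarrow> v \<in> V \<Longrightarrow> u' \<in> V \<Longrightarrow> v' \<in> V \<Longrightarrow> E u v \<Longrightarrow> E u' v' \<Longrightarrow>
        {u, v} \<noteq> {u', v'} \<Longrightarrow>
        path_image (\<gamma> u v) \<inter> path_image (\<gamma> u' v') \<subseteq> pos ` ({u, v} \<inter> {u', v'})"
    using cr0 by blast
  define A where "A i = hC (pos (va i))" for i
  define B where "B j = hC (pos (vb j))" for j
  define F where "F i j = hC \<circ> \<gamma> (va i) (vb j)" for i j
  have ih: "inj hC" by (rule hC_inj)
  have PI: "path_image (F i j) = hC ` path_image (\<gamma> (va i) (vb j))" for i j
    unfolding F_def by (simp add: path_image_compose)
  have posinj: "\<And>u v. u \<in> V \<Longrightarrow> v \<in> V \<Longrightarrow> hC (pos u) = hC (pos v) \<Longrightarrow> u = v"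
    using ip ih unfolding inj_on_def by (metis UNIV_I)
  show False
  proof (rule K33[of F A B])
    fix i j :: nat assume ij: "i < 3" "j < 3"
    note e = ed[OF inV(1)[OF ij(1)] inV(2)[OF ij(2)] adj[OF ij]]
    show "arc (F i j)" unfolding F_def using e arc_linear_image_eq[OF hC_linear hC_inj] by simp
    show "pathstart (F i j) = A i" unfolding F_def A_def using e by (simp add: pathstart_compose)
    show "pathfinish (F i j) = B j" unfolding F_def B_def using e by (simp add: pathfinish_compose)
    show "A i \<noteq> B j" unfolding A_def B_def using posinj inV ij iab by metis
  next
    show "A 0 \<noteq> A 1" unfolding A_def using posinj inV ia by (metis zero_neq_one less_numeral_extra(1)
        one_less_numeral_iff semiring_norm(77) zero_less_numeral)
  next
    fix i j :: nat assume ij: "i < 2" "j < 3"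
    have i3: "i < 3" using ij by simp
    note e = ed[OF inV(1)[OF i3] inV(2)[OF ij(2)] adj[OF i3 ij(2)]]
    have "va 2 \<noteq> va i" using ia[of 2 i] ij by auto
    moreover have "va 2 \<noteq> vb j" using iab ij by simp
    ultimately have "pos (va 2) \<notin> path_image (\<gamma> (va i) (vb j))" using e inV(1)[of 2] by auto
    then show "A 2 \<notin> path_image (F i j)" unfolding PI A_def using ih by (simp add: inj_image_mem_iff)
  next
    fix i j i' j' :: nat assume ij: "i < 3" "j < 3" "i' < 3" "j' < 3" "(i, j) \<noteq> (i', j')"
    have ne: "{va i, vb j} \<noteq> {va i', vb j'}"
      using ij ia ib iab by (metis doubleton_eq_iff prod.inject)
    have "path_image (\<gamma> (va i) (vb j)) \<inter> path_image (\<gamma> (va i') (vb j')) \<subseteq> pos ` ({va i, vb j} \<inter> {va i', vb j'})"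
      using cr[OF inV(1)[OF ij(1)] inV(2)[OF ij(2)] inV(1)[OF ij(3)] inV(2)[OF ij(4)]
          adj[OF ij(1,2)] adj[OF ij(3,4)] ne] .
    moreover have "{va i, vb j} \<inter> {va i', vb j'} \<subseteq> (if i = i' then {va i} else {}) \<union> (if j = j' then {vb j} else {})"
      using ij ia ib iab by auto
    ultimately have "path_image (\<gamma> (va i) (vb j)) \<inter> path_image (\<gamma> (va i') (vb j')) \<subseteq>
        pos ` ((if i = i' then {va i} else {}) \<union> (if j = j' then {vb j} else {}))" by blast
    then have "hC ` (path_image (\<gamma> (va i) (vb j)) \<inter> path_image (\<gamma> (va i') (vb j'))) \<subseteq>
        hC ` pos ` ((if i = i' then {va i} else {}) \<union> (if j = j' then {vb j} else {}))" by blast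
    then show "path_image (F i j) \<inter> path_image (F i' j') \<subseteq>
        (if i = i' then {A i} else {}) \<union> (if j = j' then {B j} else {})"
      unfolding PI A_def B_def image_Int[OF ih] by auto
  qed
qed

lemma coset_mem: "y \<in> coset_ideal x J \<longleftrightarrow> (\<exists>s j. y = x * s + j \<and> j \<in> J)"
  by (auto simp: coset_ideal_def)

lemma coset_ideal_is: assumes I: "is_ideal I" shows "is_ideal (coset_ideal x I)"
proof -
  have "0 \<in> coset_ideal x I" unfolding coset_mem
    using I by (intro exI[of _ 0]) (auto simp: is_ideal_def)
  moreover have "y + z \<in> coset_ideal x I" if yz: "y \<in> coset_ideal x I" "z \<in> coset_ideal x I" for y z
  proof -
    obtain s j s' j' where "y = x * s + j" "j \<in> I" "z = x * s' + j'" "j' \<in> I"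
      using yz unfolding coset_mem by blast
    then show ?thesis using I unfolding is_ideal_def coset_mem
      by (intro exI[of _ "s + s'"] exI[of _ "j + j'"]) (auto simp: algebra_simps)
  qed
  moreover have "r * y \<in> coset_ideal x I" if yy: "y \<in> coset_ideal x I" for y r
  proof -
    obtain s j where "y = x * s + j" "j \<in> I" using yy unfolding coset_mem by blast
    then show ?thesis using I unfolding is_ideal_def coset_mem
      by (intro exI[of _ "r * s"] exI[of _ "r * j"]) (auto simp: algebra_simps)
  qed
  ultimately show ?thesis unfolding is_ideal_def by blast
qed

lemma coset_self: "is_ideal I \<Longrightarrow> x \<in> coset_ideal x I"
  unfolding coset_mem is_ideal_def by (intro exI[of _ 1] exI[of _ 0]) auto

lemma coset_sup: "I \<subseteq> coset_ideal x I"
proof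
  fix y assume "y \<in> I"
  then show "y \<in> coset_ideal x I" unfolding coset_mem by (intro exI[of _ 0] exI[of _ y]) auto
qed

lemma coset_least: assumes J: "is_ideal J" and u: "u \<in> J" and IJ: "I \<subseteq> J" shows "coset_ideal u I \<subseteq> J"
proof
  fix y assume "y \<in> coset_ideal u I"
  then obtain s j where y: "y = u * s + j" "j \<in> I" unfolding coset_mem by blast
  have "s * u \<in> J" using J u by (simp add: is_ideal_def)
  then have "u * s \<in> J" by (simp add: mult.commute)
  moreover have "j \<in> J" using y IJ by blast
  ultimately show "y \<in> J" using J y by (simp add: is_ideal_def)
qed

lemma ideal_one: assumes "is_ideal J" "1 \<in> J" shows "J = UNIV"
proof -
  have m: "\<forall>x\<in>J. \<forall>r. r * x \<in> J" using assms(1) by (simp add: is_ideal_def)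
  have "r * 1 \<in> J" for r using m assms(2) by blast
  then show ?thesis by auto
qed

lemma coset_zero: "is_ideal I \<Longrightarrow> coset_ideal 0 I = I"
  by (auto simp: coset_mem)

lemma unit_notin: "is_ideal I \<Longrightarrow> I \<noteq> UNIV \<Longrightarrow> coset_ideal u I = UNIV \<Longrightarrow> u \<notin> I"
  using coset_least[of I u I] by blast

lemma unit_trans: assumes I: "is_ideal I" and u: "coset_ideal u I = UNIV" and ux: "u \<in> coset_ideal x I"
  shows "coset_ideal x I = UNIV"
  using coset_least[OF coset_ideal_is[OF I] ux coset_sup] u by auto

lemma exists_max:
  fixes J :: "'a::{finite, comm_ring_1} set"
  shows "is_ideal J \<Longrightarrow> J \<noteq> UNIV \<Longrightarrow> \<exists>M. maximal_ideal M \<and> J \<subseteq> M"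
proof (induction "card (UNIV - J)" arbitrary: J rule: less_induct)
  case less
  show ?case
  proof (cases "maximal_ideal J")
    case True then show ?thesis by blast
  next
    case False
    then obtain K where K: "is_ideal K" "J \<subseteq> K" "K \<noteq> J" "K \<noteq> UNIV"
      using less.prems unfolding maximal_ideal_def by blast
    have "card (UNIV - K) < card (UNIV - J)"
      by (rule psubset_card_mono) (use K in auto)
    then obtain M where "maximal_ideal M" "K \<subseteq> M" using less.hyps K by blast
    then show ?thesis using K by blast
  qed
qed

lemma local_unit:
  fixes I :: "'a::{finite, comm_ring_1} set"
  assumes loc: "local_ring TYPE('a)" and I: "is_ideal I" "I \<noteq> UNIV" and a: "a \<in> gamma_verts I"
  shows "coset_ideal (1 + a) I = UNIV"
proof (rule ccontr)
  assume n: "coset_ideal (1 + a) I \<noteq> UNIV"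
  obtain M1 where M1: "maximal_ideal M1" "coset_ideal (1 + a) I \<subseteq> M1"
    using exists_max[OF coset_ideal_is[OF I(1)] n] by blast
  obtain M2 where M2: "maximal_ideal M2" "coset_ideal a I \<subseteq> M2"
    using exists_max[OF coset_ideal_is[OF I(1)], of a] a by (auto simp: gamma_verts_def)
  have "M1 = M2" using loc M1(1) M2(1) unfolding local_ring_def by blast
  then have in1: "1 + a \<in> M1" "a \<in> M1" using M1 M2 coset_self[OF I(1)] by blast+
  have Mi: "is_ideal M1" "M1 \<noteq> UNIV" using M1(1) by (auto simp: maximal_ideal_def)
  have mm: "\<forall>x\<in>M1. \<forall>r. r * x \<in> M1" and ma: "\<forall>x\<in>M1. \<forall>y\<in>M1. x + y \<in> M1"
    using Mi(1) by (simp_all add: is_ideal_def)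
  have "(-1) * a \<in> M1" using mm in1(2) by blast
  then have "(1 + a) + (-1) * a \<in> M1" using ma in1(1) by blast
  then have "1 \<in> M1" by simp
  then show False using ideal_one Mi by blast
qed

lemma coset_prod: "coset_ideal (x, y) (I1 \<times> I2) = coset_ideal x I1 \<times> coset_ideal y I2"
proof -
  have "(\<exists>s j. (a, b) = (x, y) * s + j \<and> j \<in> I1 \<times> I2) \<longleftrightarrow>
      (\<exists>s j. a = x * s + j \<and> j \<in> I1) \<and> (\<exists>s j. b = y * s + j \<and> j \<in> I2)" for a b
  proof
    assume "\<exists>s j. (a, b) = (x, y) * s + j \<and> j \<in> I1 \<times> I2"
    then obtain s j where "(a, b) = (x, y) * s + j" "j \<in> I1 \<times> I2" by blast
    then show "(\<exists>s j. a = x * s + j \<and> j \<in> I1) \<and> (\<exists>s j. b = y * s + j \<and> j \<in> I2)"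
      by (cases s, cases j) (auto simp: times_prod_def)
  next
    assume "(\<exists>s j. a = x * s + j \<and> j \<in> I1) \<and> (\<exists>s j. b = y * s + j \<and> j \<in> I2)"
    then obtain s j s' j' where "a = x * s + j" "j \<in> I1" "b = y * s' + j'" "j' \<in> I2" by blast
    then show "\<exists>s j. (a, b) = (x, y) * s + j \<and> j \<in> I1 \<times> I2"
      by (intro exI[of _ "(s, s')"] exI[of _ "(j, j')"]) (auto simp: times_prod_def)
  qed
  note key = this
  show ?thesis
  proof (rule set_eqI)
    fix z :: "'a \<times> 'b"
    obtain a b where z: "z = (a, b)" by (cases z)
    have "z \<in> coset_ideal (x, y) (I1 \<times> I2) \<longleftrightarrow> (\<exists>s j. (a, b) = (x, y) * s + j \<and> j \<in> I1 \<times> I2)"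
      by (simp only: z coset_mem)
    also have "\<dots> \<longleftrightarrow> (\<exists>s j. a = x * s + j \<and> j \<in> I1) \<and> (\<exists>s j. b = y * s + j \<and> j \<in> I2)"
      by (rule key)
    also have "\<dots> \<longleftrightarrow> z \<in> coset_ideal x I1 \<times> coset_ideal y I2"
      by (simp only: z coset_mem mem_Times_iff fst_conv snd_conv)
    finally show "z \<in> coset_ideal (x, y) (I1 \<times> I2) \<longleftrightarrow> z \<in> coset_ideal x I1 \<times> coset_ideal y I2" .
  qed
qed

lemma one_neq_zero_ideal: "is_ideal (I :: 'a::comm_ring_1 set) \<Longrightarrow> I \<noteq> UNIV \<Longrightarrow> (1::'a) \<noteq> 0"
  using ideal_one unfolding is_ideal_def by metis

lemma gen1:
  fixes I1 :: "'a::comm_ring_1 set" and I2 :: "'b::comm_ring_1 set"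
  assumes I: "is_ideal I1" "I1 \<noteq> UNIV" "is_ideal I2" "I2 \<noteq> UNIV"
    and u: "coset_ideal u I1 = UNIV" and x: "coset_ideal x I1 \<noteq> UNIV"
  shows "(u, 0) \<in> gamma_verts (I1 \<times> I2)" "(x, 1) \<in> gamma_verts (I1 \<times> I2)"
    "gamma_adj (I1 \<times> I2) (u, 0) (x, 1)"
proof -
  have n1: "(1::'b) \<notin> I2" using ideal_one I(3,4) by blast
  have c0: "coset_ideal 0 I2 \<noteq> UNIV" using coset_zero I(3,4) by metis
  have un: "u \<notin> I1" using unit_notin I(1,2) u by blast
  have ux: "u \<notin> coset_ideal x I1" using unit_trans[OF I(1) u] x by blast
  have 10: "(1::'b) \<noteq> 0" using one_neq_zero_ideal I(3,4) by blast
  obtain w where w: "w \<notin> coset_ideal 0 I2" using c0 by auto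
  then have "(u, w) \<notin> coset_ideal u I1 \<times> coset_ideal 0 I2" by simp
  then have "coset_ideal (u, 0) (I1 \<times> I2) \<noteq> UNIV" unfolding coset_prod by auto
  then show v1: "(u, 0) \<in> gamma_verts (I1 \<times> I2)"
    unfolding gamma_verts_def using un by auto
  obtain w where w: "w \<notin> coset_ideal x I1" using x by auto
  then have "(w, 1) \<notin> coset_ideal x I1 \<times> coset_ideal 1 I2" by simp
  then have "coset_ideal (x, 1) (I1 \<times> I2) \<noteq> UNIV" unfolding coset_prod by auto
  then show v2: "(x, 1) \<in> gamma_verts (I1 \<times> I2)"
    unfolding gamma_verts_def using n1 by auto
  show "gamma_adj (I1 \<times> I2) (u, 0) (x, 1)"
    unfolding gamma_adj_def coset_prod using v1 v2 ux 10 n1 coset_zero[OF I(3)] by auto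
qed

lemma gen2:
  fixes I1 :: "'a::comm_ring_1 set" and I2 :: "'b::comm_ring_1 set"
  assumes I: "is_ideal I1" "I1 \<noteq> UNIV" "is_ideal I2" "I2 \<noteq> UNIV"
    and u: "coset_ideal u I2 = UNIV" and x: "coset_ideal x I2 \<noteq> UNIV"
  shows "(0, u) \<in> gamma_verts (I1 \<times> I2)" "(1, x) \<in> gamma_verts (I1 \<times> I2)"
    "gamma_adj (I1 \<times> I2) (0, u) (1, x)"
proof -
  have n1: "(1::'a) \<notin> I1" using ideal_one I(1,2) by blast
  have c0: "coset_ideal 0 I1 \<noteq> UNIV" using coset_zero I(1,2) by metis
  have un: "u \<notin> I2" using unit_notin I(3,4) u by blast
  have ux: "u \<notin> coset_ideal x I2" using unit_trans[OF I(3) u] x by blast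
  have 10: "(1::'a) \<noteq> 0" using one_neq_zero_ideal I(1,2) by blast
  obtain w where w: "w \<notin> coset_ideal 0 I1" using c0 by auto
  then have "(w, u) \<notin> coset_ideal 0 I1 \<times> coset_ideal u I2" by simp
  then have "coset_ideal (0, u) (I1 \<times> I2) \<noteq> UNIV" unfolding coset_prod by auto
  then show v1: "(0, u) \<in> gamma_verts (I1 \<times> I2)"
    unfolding gamma_verts_def using un by auto
  obtain w where w: "w \<notin> coset_ideal x I2" using x by auto
  then have "(1, w) \<notin> coset_ideal 1 I1 \<times> coset_ideal x I2" by simp
  then have "coset_ideal (1, x) (I1 \<times> I2) \<noteq> UNIV" unfolding coset_prod by auto
  then show v2: "(1, x) \<in> gamma_verts (I1 \<times> I2)"
    unfolding gamma_verts_def using n1 by auto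
  show "gamma_adj (I1 \<times> I2) (0, u) (1, x)"
    unfolding gamma_adj_def coset_prod using v1 v2 ux 10 n1 coset_zero[OF I(1)] by auto
qed

lemma lt3: "(i::nat) < 3 \<Longrightarrow> i = 0 \<or> i = 1 \<or> i = 2" by auto

lemma two_elems: "1 < card A \<Longrightarrow> \<exists>x y. x \<in> A \<and> y \<in> A \<and> x \<noteq> y"
proof -
  assume c: "1 < card A"
  then have "finite A" using card.infinite by fastforce
  then show ?thesis using c card_le_Suc0_iff_eq[of A] by (metis One_nat_def not_less)
qed

lemma coset_one: "is_ideal I \<Longrightarrow> coset_ideal 1 I = UNIV"
  using ideal_one[OF coset_ideal_is coset_self] by blast

theorem lemma3p8:
  fixes I1 :: "'a::{finite, comm_ring_1} set" and I2 :: "'b::{finite, comm_ring_1} set"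
  assumes "local_ring TYPE('a)" and "local_ring TYPE('b)"
    and "is_ideal I1" and "I1 \<noteq> UNIV"
    and "is_ideal I2" and "I2 \<noteq> UNIV"
    and "card (gamma_verts I1) > 1 \<or> card (gamma_verts I2) > 1"
  shows "\<not> planar (gamma_verts (I1 \<times> I2)) (gamma_adj (I1 \<times> I2))"
  using assms(7)
proof
  assume "card (gamma_verts I1) > 1"
  then obtain a a' where aa: "a \<in> gamma_verts I1" "a' \<in> gamma_verts I1" "a \<noteq> a'"
    using two_elems by blast
  have a0: "a \<noteq> 0" "a' \<noteq> 0" using aa assms(3) by (auto simp: gamma_verts_def is_ideal_def)
  define u where "u i = (if i = 0 then 1 else if i = (1::nat) then 1 + a else 1 + a')" for i
  define x where "x i = (if i = 0 then 0 else if i = (1::nat) then a else a')" for i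
  have U: "coset_ideal (u i) I1 = UNIV" if "i < 3" for i
    using lt3[OF that] coset_one[OF assms(3)] local_unit[OF assms(1,3,4)] aa unfolding u_def by auto
  have X: "coset_ideal (x i) I1 \<noteq> UNIV" if "i < 3" for i
    using lt3[OF that] coset_zero[OF assms(3)] assms(4) aa unfolding x_def gamma_verts_def by auto
  have 10: "(1::'b) \<noteq> 0" using one_neq_zero_ideal assms(5,6) by blast
  show ?thesis
  proof (rule planar_K33[where va = "\<lambda>i. (u i, 0)" and vb = "\<lambda>j. (x j, 1)"])
    fix i j :: nat assume "i < 3" "j < 3"
    note g = gen1[OF assms(3-6) U[OF \<open>i < 3\<close>] X[OF \<open>j < 3\<close>]]
    show "(u i, 0) \<in> gamma_verts (I1 \<times> I2)" by (rule g(1))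
    show "(x j, 1) \<in> gamma_verts (I1 \<times> I2)" by (rule g(2))
    show "gamma_adj (I1 \<times> I2) (u i, 0) (x j, 1)" by (rule g(3))
    show "(u i, 0::'b) \<noteq> (x j, 1)" using 10 by simp
  next
    fix i i' :: nat assume "i < 3" "i' < 3" "(u i, 0::'b) = (u i', 0)"
    then show "i = i'" using lt3 a0 aa(3) unfolding u_def by (auto split: if_splits)
  next
    fix i i' :: nat assume "i < 3" "i' < 3" "(x i, 1::'b) = (x i', 1)"
    then show "i = i'" using lt3 a0 aa(3) unfolding x_def by (auto split: if_splits)
  qed
next
  assume "card (gamma_verts I2) > 1"
  then obtain a a' where aa: "a \<in> gamma_verts I2" "a' \<in> gamma_verts I2" "a \<noteq> a'"
    using two_elems by blast
  have a0: "a \<noteq> 0" "a' \<noteq> 0" using aa assms(5) by (auto simp: gamma_verts_def is_ideal_def)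
  define u where "u i = (if i = 0 then 1 else if i = (1::nat) then 1 + a else 1 + a')" for i
  define x where "x i = (if i = 0 then 0 else if i = (1::nat) then a else a')" for i
  have U: "coset_ideal (u i) I2 = UNIV" if "i < 3" for i
    using lt3[OF that] coset_one[OF assms(5)] local_unit[OF assms(2,5,6)] aa unfolding u_def by auto
  have X: "coset_ideal (x i) I2 \<noteq> UNIV" if "i < 3" for i
    using lt3[OF that] coset_zero[OF assms(5)] assms(6) aa unfolding x_def gamma_verts_def by auto
  have 10: "(1::'a) \<noteq> 0" using one_neq_zero_ideal assms(3,4) by blast
  show ?thesis
  proof (rule planar_K33[where va = "\<lambda>i. (0, u i)" and vb = "\<lambda>j. (1, x j)"])
    fix i j :: nat assume "i < 3" "j < 3"
    note g = gen2[OF assms(3-6) U[OF \<open>i < 3\<close>] X[OF \<open>j < 3\<close>]]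
    show "(0, u i) \<in> gamma_verts (I1 \<times> I2)" by (rule g(1))
    show "(1, x j) \<in> gamma_verts (I1 \<times> I2)" by (rule g(2))
    show "gamma_adj (I1 \<times> I2) (0, u i) (1, x j)" by (rule g(3))
    show "(0::'a, u i) \<noteq> (1, x j)" using 10 by simp
  next
    fix i i' :: nat assume "i < 3" "i' < 3" "(0::'a, u i) = (0, u i')"
    then show "i = i'" using lt3 a0 aa(3) unfolding u_def by (auto split: if_splits)
  next
    fix i i' :: nat assume "i < 3" "i' < 3" "(1::'a, x i) = (1, x i')"
    then show "i = i'" using lt3 a0 aa(3) unfolding x_def by (auto split: if_splits)
  qed
qed

end
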